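(* Fix an allocation algorithm $A$. $A$ is truthful without money and with verification for CAs with $k$-minded bidders if and only if, for every bidder $i$ and every $\mathbf b_{-i}$, the declaration graph of $A$ for $(i,\mathbf b_{-i})$ has no edge of negative weight.
   Context: Combinatorial auction setting: a set $\mathsf U$ of $m$ goods (single supply) and $n$ bidders. The true type of bidder $i$ is $t_i=(v_i,\mathcal S_i)$, where $\mathcal S_i$ is a collection of $k$ nonempty subsets of $\mathsf U$ (demanded sets) and $v_i:\mathcal S_i\to\mathbb R_{\ge0}$; $v_i$ is extended to all $S\subseteq \mathsf U$ by $v_i(S)=\max\{v_i(S'):S'\in\mathcal S_i,\ S'\subseteq S\}$ ($0$ if no such $S'$; so $v_i(\emptyset)=0$). A declaration of bidder $i$ is a pair $c=(w,\mathcal W)$ of the same form, extended the same way; $D_i$ is the set of possible declarations of $i$. For a declaration $c=(w,\mathcal W)$ and $T\subseteq\mathsf U$, $\sigma(T\mid c)$ denotes an inclusion-maximal set in $\mathcal W\cup\{\emptyset\}$ contained in $T$ with $w(\sigma(T\mid c))=w(T)$. An allocation algorithm $A$ maps a declaration profile $\mathbf b$ to pairwise disjoint sets $A_i(\mathbf b)$ and is exact: $A_i(\mathbf b)\in\mathcal W_i\cup\{\emptyset\}$ where $b_i=(w_i,\mathcal W_i)$. Verification: bidder $i$ with true type $t_i$, facing $\mathbf b_{-i}$, may declare $b_i=(z,\mathcal T)$ only if $z(A_i(b_i,\mathbf b_{-i}))\le v_i(A_i(b_i,\mathbf b_{-i}))$. $A$ is truthful without money and with verification if for all $i$, $\mathbf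 b_{-i}$, all true types $t_i\in D_i$ and all declarations $b_i\in D_i$ permitted by verification, $v_i(A_i(t_i,\mathbf b_{-i}))\ge v_i(A_i(b_i,\mathbf b_{-i}))$. Declaration graph for $(i,\mathbf b_{-i})$: vertex set $D_i$; for $a=(z,\mathcal T)$ and $c=(w,\mathcal W)$ in $D_i$, writing $\sigma(c\mid a)$ for $\sigma(A_i(c,\mathbf b_{-i})\mid a)$, there is an arc $(a,c)$ iff $z(\sigma(c\mid a))\ge w(\sigma(c\mid c))$, and its weight is $z(\sigma(a\mid a))-z(\sigma(c\mid a))$. *)

theory Defs
  imports Complex_Main
begin

text \<open>A declaration (or type) of a bidder: a pair (w, W) of a valuation w and a
collection W of demanded sets. The function w is only meaningful on W; we
normalise it to 0 outside W so that each declaration has a unique encoding.\<close>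
type_synonym 'g decl = "('g set \<Rightarrow> real) \<times> 'g set set"

definition kdecls :: "'g set \<Rightarrow> nat \<Rightarrow> 'g decl set" where
  "kdecls U k = {(w, W). (\<forall>S\<in>W. S \<noteq> {} \<and> S \<subseteq> U) \<and> card W = k \<and>
                         (\<forall>S\<in>W. 0 \<le> w S) \<and> (\<forall>S. S \<notin> W \<longrightarrow> w S = 0)}"

definition val :: "'g decl \<Rightarrow> 'g set \<Rightarrow> real" where
  "val c T = (if {S. S \<in> snd c \<and> S \<subseteq> T} = {} then 0
              else Max (fst c ` {S. S \<in> snd c \<and> S \<subseteq> T}))"

definition sigma :: "'g set \<Rightarrow> 'g decl \<Rightarrow> 'g set" where
  "sigma T c = (SOME S. S \<in> insert {} (snd c) \<and> S \<subseteq> T \<and> val c S = val c T \<and>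
       (\<forall>S'\<in>insert {} (snd c). S \<subseteq> S' \<and> S' \<subseteq> T \<and> val c S' = val c T \<longrightarrow> S' = S))"

definition alloc_alg :: "'g decl set \<Rightarrow> (('b \<Rightarrow> 'g decl) \<Rightarrow> 'b \<Rightarrow> 'g set) \<Rightarrow> bool" where
  "alloc_alg D A = (\<forall>b. (\<forall>j. b j \<in> D) \<longrightarrow>
      (\<forall>i j. i \<noteq> j \<longrightarrow> A b i \<inter> A b j = {}) \<and> (\<forall>i. A b i \<in> insert {} (snd (b i))))"

text \<open>Truthfulness without money and with verification. The profile b stands for
b_{-i} (its i-th component is irrelevant, it is overwritten).\<close>
definition truthful_ver :: "'g decl set \<Rightarrow> (('b \<Rightarrow> 'g decl) \<Rightarrow> 'b \<Rightarrow> 'g set) \<Rightarrow> bool" where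
  "truthful_ver D A = (\<forall>i b. (\<forall>j. j \<noteq> i \<longrightarrow> b j \<in> D) \<longrightarrow>
      (\<forall>t\<in>D. \<forall>c\<in>D.
         val c (A (b(i := c)) i) \<le> val t (A (b(i := c)) i) \<longrightarrow>
         val t (A (b(i := t)) i) \<ge> val t (A (b(i := c)) i)))"

definition sig_dg :: "(('b \<Rightarrow> 'g decl) \<Rightarrow> 'b \<Rightarrow> 'g set) \<Rightarrow> 'b \<Rightarrow> ('b \<Rightarrow> 'g decl)
                       \<Rightarrow> 'g decl \<Rightarrow> 'g decl \<Rightarrow> 'g set" where
  "sig_dg A i b c a = sigma (A (b(i := c)) i) a"

definition dg_arc :: "(('b \<Rightarrow> 'g decl) \<Rightarrow> 'b \<Rightarrow> 'g set) \<Rightarrow> 'b \<Rightarrow> ('b \<Rightarrow> 'g decl)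
                       \<Rightarrow> 'g decl \<Rightarrow> 'g decl \<Rightarrow> bool" where
  "dg_arc A i b a c = (val a (sig_dg A i b c a) \<ge> val c (sig_dg A i b c c))"

definition dg_weight :: "(('b \<Rightarrow> 'g decl) \<Rightarrow> 'b \<Rightarrow> 'g set) \<Rightarrow> 'b \<Rightarrow> ('b \<Rightarrow> 'g decl)
                       \<Rightarrow> 'g decl \<Rightarrow> 'g decl \<Rightarrow> real" where
  "dg_weight A i b a c = val a (sig_dg A i b a a) - val a (sig_dg A i b c a)"

definition no_negative_arc :: "'g decl set \<Rightarrow> (('b \<Rightarrow> 'g decl) \<Rightarrow> 'b \<Rightarrow> 'g set) \<Rightarrow> 'b
                       \<Rightarrow> ('b \<Rightarrow> 'g decl) \<Rightarrow> bool" where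
  "no_negative_arc D A i b = (\<forall>a\<in>D. \<forall>c\<in>D. dg_arc A i b a c \<longrightarrow> dg_weight A i b a c \<ge> 0)"

end

theory Submission
  imports Defs
begin

lemma val_mono:
  assumes "finite (snd a)" "S \<subseteq> T" "\<forall>X. 0 \<le> fst a X"
  shows "val a S \<le> val a T"
proof -
  have sub: "{X. X \<in> snd a \<and> X \<subseteq> S} \<subseteq> {X. X \<in> snd a \<and> X \<subseteq> T}" using assms(2) by auto
  have fin: "finite {X. X \<in> snd a \<and> X \<subseteq> T}" using assms(1) by simp
  show ?thesis
  proof (cases "{X. X \<in> snd a \<and> X \<subseteq> S} = {}")
    case True
    show ?thesis
    proof (cases "{X. X \<in> snd a \<and> X \<subseteq> T} = {}")
      case False
      then obtain X where X: "X \<in> {X. X \<in> snd a \<and> X \<subseteq> T}" by blast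
      have "fst a X \<le> Max (fst a ` {X. X \<in> snd a \<and> X \<subseteq> T})"
        using fin X by (intro Max_ge) auto
      then show ?thesis unfolding val_def using True False assms(3)[rule_format, of X] by simp
    qed (simp add: val_def True)
  next
    case False
    then have "{X. X \<in> snd a \<and> X \<subseteq> T} \<noteq> {}" using sub by blast
    then show ?thesis unfolding val_def using False sub fin
      by (auto intro!: Max_mono image_mono)
  qed
qed

lemma sigma_val:
  assumes "finite U" "a \<in> kdecls U k"
  shows "val a (sigma T a) = val a T"
proof -
  obtain w W where a: "a = (w, W)" by fastforce
  have WU: "\<forall>S\<in>W. S \<noteq> {} \<and> S \<subseteq> U" and wn: "\<forall>S. 0 \<le> w S"
    using assms(2) unfolding a kdecls_def by auto
  have finW: "finite W" using WU assms(1)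
    by (meson Pow_iff finite_Pow_iff rev_finite_subset subsetI)
  define C where "C = {S. S \<in> insert {} W \<and> S \<subseteq> T \<and> val a S = val a T}"
  have finC: "finite C" unfolding C_def using finW by (auto intro: rev_finite_subset[of "insert {} W"])
  have valE: "val a {} = 0" unfolding val_def a using WU by auto
  have "C \<noteq> {}"
  proof (cases "{X. X \<in> W \<and> X \<subseteq> T} = {}")
    case True
    then have "val a T = 0" unfolding val_def a by simp
    then show ?thesis unfolding C_def using valE by auto
  next
    case False
    have fin: "finite {X. X \<in> W \<and> X \<subseteq> T}" using finW by simp
    have "Max (w ` {X. X \<in> W \<and> X \<subseteq> T}) \<in> w ` {X. X \<in> W \<and> X \<subseteq> T}"
      using False fin by (intro Max_in) auto
    then obtain S where S: "S \<in> W" "S \<subseteq> T" "w S = Max (w ` {X. X \<in> W \<and> X \<subseteq> T})"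
      by auto
    have "val a T = Max (w ` {X. X \<in> W \<and> X \<subseteq> T})" unfolding val_def a using False by auto
    with S have S: "S \<in> W" "S \<subseteq> T" "w S = val a T" by auto
    have "val a S \<le> val a T" using val_mono[of a S T] finW S wn a by auto
    moreover have "w S \<le> val a S"
    proof -
      have ne: "{X. X \<in> W \<and> X \<subseteq> S} \<noteq> {}" using S by auto
      have "w S \<le> Max (w ` {X. X \<in> W \<and> X \<subseteq> S})" using S finW by (intro Max_ge) (auto intro!: image_eqI[of _ w S])
      then show ?thesis unfolding val_def a using ne by auto
    qed
    ultimately have "val a S = val a T" using S by linarith
    then show ?thesis unfolding C_def using S by auto
  qed
  then have "card ` C \<noteq> {}" by simp
  then have "Max (card ` C) \<in> card ` C" using finC by (intro Max_in) auto
  then obtain S where S: "S \<in> C" "card S = Max (card ` C)" by auto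
  have finS: "\<And>X. X \<in> insert {} W \<Longrightarrow> finite X" using WU assms(1) finite_subset by auto
  have ex: "\<exists>S. S \<in> insert {} (snd a) \<and> S \<subseteq> T \<and> val a S = val a T \<and>
       (\<forall>S'\<in>insert {} (snd a). S \<subseteq> S' \<and> S' \<subseteq> T \<and> val a S' = val a T \<longrightarrow> S' = S)"
  proof (intro exI[of _ S] conjI ballI impI)
    show "S \<in> insert {} (snd a)" "S \<subseteq> T" "val a S = val a T" using S unfolding C_def a by auto
  next
    fix S' assume h: "S' \<in> insert {} (snd a)" "S \<subseteq> S' \<and> S' \<subseteq> T \<and> val a S' = val a T"
    then have "S' \<in> C" unfolding C_def a by auto
    then have "card S' \<le> card S" using S finC by auto
    moreover have "finite S'" using h finS a by auto
    ultimately show "S' = S" using h card_seteq by blast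
  qed
  show ?thesis unfolding sigma_def using someI_ex[OF ex] by blast
qed

theorem proposition1:
  fixes U :: "'g set" and k :: nat
    and A :: "('b::finite \<Rightarrow> 'g decl) \<Rightarrow> 'b \<Rightarrow> 'g set"
  assumes "finite U"
    and "alloc_alg (kdecls U k) A"
  shows "truthful_ver (kdecls U k) A \<longleftrightarrow>
         (\<forall>i b. (\<forall>j. j \<noteq> i \<longrightarrow> b j \<in> kdecls U k) \<longrightarrow> no_negative_arc (kdecls U k) A i b)"
  unfolding truthful_ver_def no_negative_arc_def dg_arc_def dg_weight_def sig_dg_def
  using sigma_val[OF assms(1)] by (simp add: algebra_simps)

end
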